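(* For the decoupled single-device problem with parameters $\varphi>0$, $p\in(0,1)$, let $\Gamma(c)$ be the optimal threshold for sampling cost $c\ge0$ and let the passive set be $\mathcal{Q}(c)=\{n\in\mathbb{Z}:0\le n<\Gamma(c)\}$. Then $\Gamma(c)$ is nondecreasing in $c$; equivalently, for all $0\le c_1<c_2$, $\mathcal{Q}(c_1)\subseteq\mathcal{Q}(c_2)$. That is, the decoupled problem is indexable (and hence so is the $M$-device flow-sampling problem, each of whose devices yields such a decoupled problem).
   Context: Decoupled single-device problem: a Markov decision process with state space $\{0,1,2,\dots\}$ (a counter $n$) and action set $\{0,1\}$ ($0$ = rest, $1$ = sample). Transitions: from state $n$ under action $1$ go to state $0$ with probability $1$; under action $0$ go to state $0$ with probability $p$ and to state $n+1$ with probability $1-p$. Immediate cost: $C(n,1)=c+\varphi n$ and $C(n,0)=\varphi n$, where $c\ge0$ is a fixed sampling cost. The objective is to minimize the long-run average cost. The average-cost optimal policy is a threshold policy: for each $c$ there is an integer $\Gamma(c)\ge0$ such that it is optimal to rest in states $n<\Gamma(c)$ and to sample in states $n\ge\Gamma(c)$. A problem is called indexable if the passive set (set of states where resting is optimal) is monotone nondecreasing in the sampling cost $c$. *)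

theory Defs
  imports "HOL-Probability.Probability"
begin

text \<open>Decoupled single-device MDP. States: nat (the counter n). Actions: nat, where
  0 = rest and 1 = sample (admissible actions are 0 and 1).\<close>

definition trans :: "real \<Rightarrow> nat \<Rightarrow> nat \<Rightarrow> nat pmf" where
  "trans p a n = (if a = 1 then return_pmf 0
                  else map_pmf (\<lambda>b. if b then 0 else Suc n) (bernoulli_pmf p))"

definition cost :: "real \<Rightarrow> real \<Rightarrow> nat \<Rightarrow> nat \<Rightarrow> real" where
  "cost c \<phi> n a = (if a = 1 then c + \<phi> * real n else \<phi> * real n)"

primrec state_dist :: "real \<Rightarrow> (nat \<Rightarrow> nat) \<Rightarrow> nat \<Rightarrow> nat \<Rightarrow> nat pmf" where
  "state_dist p f s 0 = return_pmf s"
| "state_dist p f s (Suc t) = bind_pmf (state_dist p f s t) (\<lambda>n. trans p (f n) n)"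

definition avg_cost :: "real \<Rightarrow> real \<Rightarrow> real \<Rightarrow> (nat \<Rightarrow> nat) \<Rightarrow> nat \<Rightarrow> ereal" where
  "avg_cost p \<phi> c f s =
     limsup (\<lambda>T. ereal ((\<Sum>t<T. measure_pmf.expectation (state_dist p f s t)
                                     (\<lambda>n. cost c \<phi> n (f n))) / real T))"

definition admissible :: "(nat \<Rightarrow> nat) \<Rightarrow> bool" where
  "admissible f \<longleftrightarrow> (\<forall>n. f n \<in> {0, 1})"

definition threshold_policy :: "nat \<Rightarrow> nat \<Rightarrow> nat" where
  "threshold_policy \<Gamma> n = (if n < \<Gamma> then 0 else 1)"

definition optimal_threshold :: "real \<Rightarrow> real \<Rightarrow> real \<Rightarrow> nat \<Rightarrow> bool" where
  "optimal_threshold p \<phi> c \<Gamma> \<longleftrightarrow>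
     (\<forall>f s. admissible f \<longrightarrow> avg_cost p \<phi> c (threshold_policy \<Gamma>) s \<le> avg_cost p \<phi> c f s)"

definition passive_set :: "nat \<Rightarrow> nat set" where
  "passive_set \<Gamma> = {n. n < \<Gamma>}"

end

theory Submission imports Defs begin

definition W :: "real \<Rightarrow> nat \<Rightarrow> real" where
  "W p n = (\<Sum>j\<in>{1..n}. (1/(1-p))^j)"

lemma W_Suc: "W p (Suc n) = W p n + (1/(1-p))^(Suc n)"
  by (simp add: W_def)

lemma W_rec: assumes "p < 1" shows "(1-p) * W p (Suc n) = 1 + W p n"
proof (induction n)
  case 0 then show ?case using assms by (simp add: W_def)
next
  case (Suc n)
  have "(1-p) * W p (Suc (Suc n)) = (1-p) * W p (Suc n) + (1-p) * (1/(1-p))^(Suc (Suc n))"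
    by (simp add: W_Suc algebra_simps)
  also have "(1-p) * (1/(1-p))^(Suc (Suc n)) = (1/(1-p))^(Suc n)"
  proof -
    have q: "(1-p) * (1/(1-p)) = 1" using assms by simp
    have "(1-p) * (1/(1-p))^(Suc (Suc n)) = ((1-p) * (1/(1-p))) * (1/(1-p))^(Suc n)"
      by (simp only: power_Suc mult.assoc)
    then show ?thesis using q by simp
  qed
  finally show ?case using Suc by (simp add: W_Suc)
qed

lemma W_nonneg: assumes "p < 1" shows "0 \<le> W p n"
  unfolding W_def using assms by (intro sum_nonneg) simp

lemma W_strict: assumes "p < 1" "m < n" shows "W p m < W p n"
  using assms(2)
proof (induction n)
  case 0 then show ?case by simp
next
  case (Suc n)
  have pos: "0 < (1/(1-p))^(Suc n)" using assms(1) by simp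
  show ?case
  proof (cases "m = n")
    case True then show ?thesis using pos by (simp add: W_Suc)
  next
    case False then have "W p m < W p n" using Suc by simp
    then show ?thesis using pos by (simp add: W_Suc)
  qed
qed

lemma W_mono: assumes "p < 1" "m \<le> n" shows "W p m \<le> W p n"
  using W_strict[OF assms(1)] assms(2) by (cases "m = n") (auto simp: le_less)

lemma exp_bind:
  fixes g :: "'a \<Rightarrow> real"
  assumes A: "finite A" and M: "set_pmf M \<subseteq> A" and K: "\<And>n. n \<in> A \<Longrightarrow> set_pmf (K n) \<subseteq> A"
  shows "measure_pmf.expectation (bind_pmf M K) g = measure_pmf.expectation M (\<lambda>n. measure_pmf.expectation (K n) g)"
proof -
  have sb: "set_pmf (bind_pmf M K) \<subseteq> A" using M K by (auto simp: set_bind_pmf)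
  have "measure_pmf.expectation (bind_pmf M K) g = (\<Sum>j\<in>A. g j * pmf (bind_pmf M K) j)"
    using sb by (intro integral_measure_pmf_real[OF A]) auto
  also have "\<dots> = (\<Sum>j\<in>A. g j * (\<Sum>n\<in>A. pmf (K n) j * pmf M n))"
    by (intro sum.cong refl, simp add: pmf_bind, subst integral_measure_pmf_real[OF A]) (use M in auto)
  also have "\<dots> = (\<Sum>n\<in>A. (\<Sum>j\<in>A. g j * pmf (K n) j) * pmf M n)"
  proof -
    have "(\<Sum>j\<in>A. g j * (\<Sum>n\<in>A. pmf (K n) j * pmf M n)) = (\<Sum>j\<in>A. \<Sum>n\<in>A. g j * pmf (K n) j * pmf M n)"
      by (simp add: sum_distrib_left mult.assoc)
    also have "\<dots> = (\<Sum>n\<in>A. \<Sum>j\<in>A. g j * pmf (K n) j * pmf M n)"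
      by (rule sum.swap)
    also have "\<dots> = (\<Sum>n\<in>A. (\<Sum>j\<in>A. g j * pmf (K n) j) * pmf M n)"
      by (simp add: sum_distrib_right)
    finally show ?thesis .
  qed
  also have "\<dots> = (\<Sum>n\<in>A. measure_pmf.expectation (K n) g * pmf M n)"
    by (intro sum.cong refl, subst integral_measure_pmf_real[OF A]) (use K in auto)
  also have "\<dots> = measure_pmf.expectation M (\<lambda>n. measure_pmf.expectation (K n) g)"
    using M by (intro integral_measure_pmf_real[OF A, symmetric]) auto
  finally show ?thesis .
qed

lemma trans_supp: "set_pmf (trans p (threshold_policy G n) n) \<subseteq> {..G}"
  by (auto simp: trans_def threshold_policy_def)

lemma dist_supp: "set_pmf (state_dist p (threshold_policy G) 0 t) \<subseteq> {..G}"
proof (induction t)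
  case 0 then show ?case by simp
next
  case (Suc t) then show ?case using trans_supp[of p G] by (auto simp: set_bind_pmf)
qed


definition V :: "real \<Rightarrow> nat \<Rightarrow> nat \<Rightarrow> real" where
  "V p G n = W p (min n G)"

definition H :: "real \<Rightarrow> nat \<Rightarrow> real" where
  "H p G = 1 + W p G"

definition ind :: "nat \<Rightarrow> nat \<Rightarrow> real" where
  "ind G n = (if G \<le> n then 1 else 0)"

abbreviation E :: "real \<Rightarrow> nat \<Rightarrow> nat \<Rightarrow> (nat \<Rightarrow> real) \<Rightarrow> real" where
  "E p G t g \<equiv> measure_pmf.expectation (state_dist p (threshold_policy G) 0 t) g"

lemma integ: "integrable (measure_pmf (state_dist p (threshold_policy G) 0 t)) (g :: nat \<Rightarrow> real)"
  by (rule integrable_measure_pmf_finite) (use dist_supp[of p G t] in \<open>auto intro: finite_subset\<close>)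

lemma step: "E p G (Suc t) g = E p G t (\<lambda>n. measure_pmf.expectation (trans p (threshold_policy G n) n) g)"
  by (simp only: state_dist.simps) (rule exp_bind[OF _ dist_supp trans_supp], simp)

lemma trans_V:
  assumes "0 \<le> p" "p < 1"
  shows "measure_pmf.expectation (trans p (threshold_policy G n) n) (V p G) = V p G n + 1 - H p G * ind G n"
proof (cases "n < G")
  case True
  have "measure_pmf.expectation (trans p (threshold_policy G n) n) (V p G) = (1-p) * W p (Suc n)"
    using True assms by (simp add: trans_def threshold_policy_def V_def W_def min_def)
  also have "\<dots> = 1 + W p n" by (rule W_rec[OF assms(2)])
  finally show ?thesis using True by (simp add: V_def ind_def min_def)
next
  case False
  then show ?thesis by (simp add: trans_def threshold_policy_def V_def W_def H_def ind_def min_def)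
qed

lemma drift:
  assumes "0 \<le> p" "p < 1"
  shows "E p G (Suc t) (V p G) = E p G t (V p G) + 1 - H p G * E p G t (ind G)"
proof -
  have "E p G (Suc t) (V p G) = E p G t (\<lambda>n. V p G n + 1 - H p G * ind G n)"
    unfolding step using trans_V[OF assms] by simp
  also have "\<dots> = E p G t (V p G) + 1 - H p G * E p G t (ind G)"
    by (simp add: integ Bochner_Integration.integral_add Bochner_Integration.integral_diff)
  finally show ?thesis .
qed

lemma sum_ind:
  assumes "0 \<le> p" "p < 1"
  shows "(\<Sum>t<T. E p G t (ind G)) * H p G = real T - E p G T (V p G)"
proof (induction T)
  case 0 then show ?case by (simp add: V_def W_def)
next
  case (Suc T) then show ?case using drift[OF assms, of G T] by (simp add: algebra_simps)
qed

lemma V_bounds: assumes "p < 1" shows "0 \<le> V p G n" "V p G n \<le> W p G"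
  unfolding V_def using W_nonneg[OF assms] W_mono[OF assms] by auto

lemma EV_bounds: assumes "p < 1" shows "0 \<le> E p G t (V p G)" "E p G t (V p G) \<le> W p G"
proof -
  show "0 \<le> E p G t (V p G)" using V_bounds[OF assms] by (intro Bochner_Integration.integral_nonneg) auto
  have "0 \<le> E p G t (\<lambda>n. W p G - V p G n)" using V_bounds[OF assms] by (intro Bochner_Integration.integral_nonneg) auto
  then show "E p G t (V p G) \<le> W p G" by (simp add: integ Bochner_Integration.integral_diff)
qed

lemma En_bounds: "0 \<le> E p G t real" "E p G t real \<le> real G"
proof -
  show "0 \<le> E p G t real" by (intro Bochner_Integration.integral_nonneg) auto
  have "AE n in measure_pmf (state_dist p (threshold_policy G) 0 t). 0 \<le> real G - real n"
    using dist_supp[of p G t] by (auto simp: AE_measure_pmf_iff)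
  then have "0 \<le> E p G t (\<lambda>n. real G - real n)" by (intro integral_nonneg_AE) auto
  then show "E p G t real \<le> real G" by (simp add: integ Bochner_Integration.integral_diff)
qed

lemma Ecost: "E p G t (\<lambda>n. cost c \<phi> n (threshold_policy G n)) = \<phi> * E p G t real + c * E p G t (ind G)"
proof -
  have "E p G t (\<lambda>n. cost c \<phi> n (threshold_policy G n)) = E p G t (\<lambda>n. \<phi> * real n + c * ind G n)"
    by (intro Bochner_Integration.integral_cong refl) (auto simp: cost_def threshold_policy_def ind_def)
  also have "\<dots> = \<phi> * E p G t real + c * E p G t (ind G)"
    by (simp add: integ Bochner_Integration.integral_add)
  finally show ?thesis .
qed


lemma H_pos: assumes "p < 1" shows "0 < H p G"
  using W_nonneg[OF assms, of G] by (simp add: H_def)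

lemma B_lim:
  assumes "0 \<le> p" "p < 1"
  shows "(\<lambda>T. (\<Sum>t<T. E p G t (ind G)) / real T) \<longlonglongrightarrow> 1 / H p G"
proof -
  have Hp: "0 < H p G" by (rule H_pos[OF assms(2)])
  have ev: "\<forall>\<^sub>F T in sequentially. (\<Sum>t<T. E p G t (ind G)) / real T = 1 / H p G - E p G T (V p G) / (H p G * real T)"
    using eventually_ge_at_top[of "1::nat"]
  proof (rule eventually_mono)
    fix T :: nat assume T: "1 \<le> T"
    have "(\<Sum>t<T. E p G t (ind G)) = (real T - E p G T (V p G)) / H p G"
      using sum_ind[OF assms, of G T] Hp by (simp add: field_simps)
    then show "(\<Sum>t<T. E p G t (ind G)) / real T = 1 / H p G - E p G T (V p G) / (H p G * real T)"
      using T Hp by (simp add: field_simps)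
  qed
  have z: "(\<lambda>T. E p G T (V p G) / (H p G * real T)) \<longlonglongrightarrow> 0"
  proof (rule tendsto_sandwich[of "\<lambda>_. 0" _ _ "\<lambda>T. (W p G / H p G) / real T"])
    show "\<forall>\<^sub>F n in sequentially. 0 \<le> E p G n (V p G) / (H p G * real n)"
      using EV_bounds[OF assms(2)] Hp by (intro always_eventually allI divide_nonneg_nonneg) auto
    show "\<forall>\<^sub>F n in sequentially. E p G n (V p G) / (H p G * real n) \<le> (W p G / H p G) / real n"
    proof (intro always_eventually allI)
      fix n
      have "E p G n (V p G) / (H p G * real n) = (E p G n (V p G) / H p G) / real n" by simp
      also have "\<dots> \<le> (W p G / H p G) / real n"
        using EV_bounds[OF assms(2), of G n] Hp by (intro divide_right_mono) auto
      finally show "E p G n (V p G) / (H p G * real n) \<le> (W p G / H p G) / real n" .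
    qed
  qed (rule tendsto_const, rule lim_const_over_n)
  have "(\<lambda>T. 1 / H p G - E p G T (V p G) / (H p G * real T)) \<longlonglongrightarrow> 1 / H p G - 0"
    by (intro tendsto_diff tendsto_const z)
  then show ?thesis using ev by (simp add: tendsto_cong)
qed

lemma avg_formula:
  assumes "0 \<le> p" "p < 1" "0 < \<phi>"
  shows "\<exists>r. \<forall>c. avg_cost p \<phi> c (threshold_policy G) 0 = ereal (c / H p G + r)"
proof -
  define A where "A T = (\<Sum>t<T. \<phi> * E p G t real) / real T" for T
  define B where "B T = (\<Sum>t<T. E p G t (ind G)) / real T" for T
  define LA where "LA = limsup (\<lambda>T. ereal (A T))"
  have A_bd: "0 \<le> A T" "A T \<le> \<phi> * real G" for T
  proof -
    show "0 \<le> A T" unfolding A_def using En_bounds assms(3)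
      by (intro divide_nonneg_nonneg sum_nonneg) auto
    have "(\<Sum>t<T. \<phi> * E p G t real) \<le> (\<Sum>t<T. \<phi> * real G)"
      using En_bounds assms(3) by (intro sum_mono mult_left_mono) auto
    then have "(\<Sum>t<T. \<phi> * E p G t real) \<le> real T * (\<phi> * real G)" by simp
    then show "A T \<le> \<phi> * real G" unfolding A_def using assms(3)
      by (cases "T = 0") (auto simp: field_simps)
  qed
  have LA0: "0 \<le> LA"
  proof -
    have "limsup (\<lambda>T. ereal 0) \<le> LA" unfolding LA_def
      using A_bd by (intro Limsup_mono always_eventually allI) auto
    then show ?thesis by (simp add: Limsup_const zero_ereal_def)
  qed
  have LA1: "LA \<le> ereal (\<phi> * real G)"
  proof -
    have "LA \<le> limsup (\<lambda>T. ereal (\<phi> * real G))" unfolding LA_def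
      using A_bd by (intro Limsup_mono always_eventually allI) auto
    then show ?thesis by (simp add: Limsup_const)
  qed
  obtain r where r: "LA = ereal r" using LA0 LA1
    by (cases LA) auto
  have "avg_cost p \<phi> c (threshold_policy G) 0 = ereal (c / H p G + r)" for c
  proof -
    have eq: "(\<Sum>t<T. measure_pmf.expectation (state_dist p (threshold_policy G) 0 t)
                 (\<lambda>n. cost c \<phi> n (threshold_policy G n))) / real T = c * B T + A T" for T
      unfolding Ecost A_def B_def
      by (simp add: sum.distrib sum_distrib_left add_divide_distrib)
    have "avg_cost p \<phi> c (threshold_policy G) 0 = limsup (\<lambda>T. ereal (c * B T) + ereal (A T))"
      unfolding avg_cost_def eq by simp
    also have "\<dots> = ereal (c / H p G) + LA" unfolding LA_def
    proof (rule ereal_limsup_lim_add)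
      have "B \<longlonglongrightarrow> 1 / H p G" unfolding B_def by (rule B_lim[OF assms(1,2)])
      then have "(\<lambda>T. c * B T) \<longlonglongrightarrow> c * (1 / H p G)" by (intro tendsto_mult tendsto_const)
      then show "(\<lambda>T. ereal (c * B T)) \<longlonglongrightarrow> ereal (c / H p G)" by simp
    qed simp
    finally show ?thesis using r by simp
  qed
  then show ?thesis by blast
qed

theorem lemma6:
  fixes \<phi> p c1 c2 :: real and \<Gamma>1 \<Gamma>2 :: nat
  assumes "\<phi> > 0" and "0 < p" and "p < 1"
    and "0 \<le> c1" and "c1 < c2"
    and "optimal_threshold p \<phi> c1 \<Gamma>1"
    and "optimal_threshold p \<phi> c2 \<Gamma>2"
  shows "\<Gamma>1 \<le> \<Gamma>2 \<and> passive_set \<Gamma>1 \<subseteq> passive_set \<Gamma>2"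
proof -
  have p0: "0 \<le> p" using assms(2) by simp
  obtain r1 where r1: "\<And>c. avg_cost p \<phi> c (threshold_policy \<Gamma>1) 0 = ereal (c / H p \<Gamma>1 + r1)"
    using avg_formula[OF p0 assms(3,1), of \<Gamma>1] by blast
  obtain r2 where r2: "\<And>c. avg_cost p \<phi> c (threshold_policy \<Gamma>2) 0 = ereal (c / H p \<Gamma>2 + r2)"
    using avg_formula[OF p0 assms(3,1), of \<Gamma>2] by blast
  have adm: "admissible (threshold_policy G)" for G
    by (simp add: admissible_def threshold_policy_def)
  have i1: "c1 / H p \<Gamma>1 + r1 \<le> c1 / H p \<Gamma>2 + r2"
    using assms(6) adm[of \<Gamma>2] r1 r2 unfolding optimal_threshold_def by (metis ereal_less_eq(3))
  have i2: "c2 / H p \<Gamma>2 + r2 \<le> c2 / H p \<Gamma>1 + r1"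
    using assms(7) adm[of \<Gamma>1] r1 r2 unfolding optimal_threshold_def by (metis ereal_less_eq(3))
  define x1 where "x1 = 1 / H p \<Gamma>1"
  define x2 where "x2 = 1 / H p \<Gamma>2"
  have j1: "c1 * x1 + r1 \<le> c1 * x2 + r2" using i1 unfolding x1_def x2_def by simp
  have j2: "c2 * x2 + r2 \<le> c2 * x1 + r1" using i2 unfolding x1_def x2_def by simp
  have "(c2 - c1) * (x2 - x1) = (c2 * x2 + c1 * x1) - (c1 * x2 + c2 * x1)" by (simp add: algebra_simps)
  then have "(c2 - c1) * (x2 - x1) \<le> 0" using j1 j2 by linarith
  then have "x2 \<le> x1" using assms(5)
    by (smt (verit) mult_pos_pos)
  then have "H p \<Gamma>1 \<le> H p \<Gamma>2" unfolding x1_def x2_def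
    using H_pos[OF assms(3)] by (simp add: divide_le_cancel frac_le_eq field_simps)
  then have "W p \<Gamma>1 \<le> W p \<Gamma>2" by (simp add: H_def)
  then have le: "\<Gamma>1 \<le> \<Gamma>2" using W_strict[OF assms(3), of \<Gamma>2 \<Gamma>1] by linarith
  then show ?thesis by (auto simp: passive_set_def)
qed

end
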